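(* Let $k>0$, $\delta(t)=\tfrac12e^{-t}+\tfrac12e^{-2t}$, $g_2\equiv0$ and $g_1(a)=-\frac14a^4+ka^3-k^2a^2-\frac34a-1$. Then in the continuous-time two-state model, $Q^*\sim(0,0)$ is a weak equilibrium but not a strong equilibrium. Moreover, for every sufficiently small $h>0$, the transition matrix $u^*\sim(0,0)$ (the identity matrix) is an equilibrium of the discrete-time problem $V^h(i,u)=\mathbb E_{i,u}[\sum_{n=0}^\infty\kappa^h(n,Y_n,u_{Y_n})]$ over all $2\times2$ transition matrices, where $\kappa^h(n,1,u_1)=\delta(nh)g_1(\alpha/h)h$ and $\kappa^h(n,2,u_2)=\delta(nh)g_2(\beta/h)h\equiv0$ for $u\sim(\alpha,\beta)$; consequently the associated generators $(u^*-I)/h\sim(0,0)$ converge to the weak but not strong equilibrium $Q^*$.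
   Context: Two-state continuous-time model: $S=\{1,2\}$, admissible rows unrestricted, so every generator has the form $Q=\begin{pmatrix}-a&a\\ b&-b\end{pmatrix}$, $a,b\ge0$, written $Q\sim(a,b)$; payoff $f(t,1,(-a,a))=\delta(t)g_1(a)$, $f(t,2,(b,-b))=\delta(t)g_2(b)$; $F(i,Q)=\mathbb E_{i,Q}[\int_0^\infty f(t,X_t,Q_{X_t})dt]$ for the chain $X$ with generator $Q$; $Q\otimes_\varepsilon Q'$ uses $Q$ on $[0,\varepsilon]$ and $Q'$ afterwards. $Q^*$ is a weak equilibrium if $\liminf_{\varepsilon\downarrow0}\varepsilon^{-1}(F(i,Q^* )-F(i,Q\otimes_\varepsilon Q^* ))\ge0$ for all $Q,i$; a strong equilibrium if for every $i,Q$ there is $\varepsilon>0$ with $F(i,Q^* )\ge F(i,Q\otimes_{\varepsilon'}Q^* )$ for all $0<\varepsilon'\le\varepsilon$. Discrete time: a transition matrix $u=\begin{pmatrix}1-\alpha&\alpha\\ \beta&1-\beta\end{pmatrix}$, $\alpha,\beta\in[0,1]$, is written $u\sim(\alpha,\beta)$; $Y$ is the discrete-time chain with transition matrix $u$; $u\otimes_1u^*$ uses $u$ at time $0$ and $u^*$ afterwards; $u^*$ is an equilibrium of $V^h$ if $V^h(i,u^* )\ge V^h(i,u\otimes_1u^* )$ for all $i\in S$ and all transition matrices $u$. *)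

theory Defs
  imports "HOL-Analysis.Analysis"
begin

definition gen :: "real \<Rightarrow> real \<Rightarrow> nat \<Rightarrow> nat \<Rightarrow> real" where
  "gen a b i j = (if i = 1 then (if j = 1 then - a else a) else (if j = 1 then b else - b))"

text \<open>Transition probabilities P_t = exp(t Q) of the chain with constant generator Q ~ (a,b).
  Since Q^2 = -(a+b) Q, exp(t Q) = I + phi(t) Q with phi(t) = (1 - exp(-(a+b)t))/(a+b)
  (and phi(t) = t if a + b = 0).\<close>
definition ctrans :: "real \<Rightarrow> real \<Rightarrow> real \<Rightarrow> nat \<Rightarrow> nat \<Rightarrow> real" where
  "ctrans a b t i j =
     (let lam = a + b;
          phi = (if lam = 0 then t else (1 - exp (- lam * t)) / lam)
      in (if i = j then 1 else 0) + phi * gen a b i j)"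

definition crew :: "(real \<Rightarrow> real) \<Rightarrow> (real \<Rightarrow> real) \<Rightarrow> (real \<Rightarrow> real)
    \<Rightarrow> real \<Rightarrow> real \<Rightarrow> real \<Rightarrow> nat \<Rightarrow> real" where
  "crew \<delta> g1 g2 a b t j = \<delta> t * (if j = 1 then g1 a else g2 b)"

definition cF :: "(real \<Rightarrow> real) \<Rightarrow> (real \<Rightarrow> real) \<Rightarrow> (real \<Rightarrow> real)
    \<Rightarrow> real \<Rightarrow> real \<Rightarrow> nat \<Rightarrow> real" where
  "cF \<delta> g1 g2 a b i =
     integral {0..} (\<lambda>t. \<Sum>j\<in>{1,2}. ctrans a b t i j * crew \<delta> g1 g2 a b t j)"

definition cFcat :: "(real \<Rightarrow> real) \<Rightarrow> (real \<Rightarrow> real) \<Rightarrow> (real \<Rightarrow> real)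
    \<Rightarrow> real \<Rightarrow> real \<Rightarrow> real \<Rightarrow> real \<Rightarrow> real \<Rightarrow> nat \<Rightarrow> real" where
  "cFcat \<delta> g1 g2 a b \<epsilon> a' b' i =
     integral {0..\<epsilon>} (\<lambda>t. \<Sum>j\<in>{1,2}. ctrans a b t i j * crew \<delta> g1 g2 a b t j)
   + integral {\<epsilon>..} (\<lambda>t. \<Sum>j\<in>{1,2}. \<Sum>k\<in>{1,2}.
        ctrans a b \<epsilon> i j * ctrans a' b' (t - \<epsilon>) j k * crew \<delta> g1 g2 a' b' t k)"

definition weak_equilibrium :: "(real \<Rightarrow> real) \<Rightarrow> (real \<Rightarrow> real) \<Rightarrow> (real \<Rightarrow> real)
    \<Rightarrow> real \<Rightarrow> real \<Rightarrow> bool" where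
  "weak_equilibrium \<delta> g1 g2 a b \<longleftrightarrow>
     (\<forall>a' b' i. 0 \<le> a' \<longrightarrow> 0 \<le> b' \<longrightarrow> i \<in> {1,2} \<longrightarrow>
        Liminf (at_right 0)
          (\<lambda>\<epsilon>. ereal ((cF \<delta> g1 g2 a b i - cFcat \<delta> g1 g2 a' b' \<epsilon> a b i) / \<epsilon>)) \<ge> 0)"

definition strong_equilibrium :: "(real \<Rightarrow> real) \<Rightarrow> (real \<Rightarrow> real) \<Rightarrow> (real \<Rightarrow> real)
    \<Rightarrow> real \<Rightarrow> real \<Rightarrow> bool" where
  "strong_equilibrium \<delta> g1 g2 a b \<longleftrightarrow>
     (\<forall>a' b' i. 0 \<le> a' \<longrightarrow> 0 \<le> b' \<longrightarrow> i \<in> {1,2} \<longrightarrow>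
        (\<exists>\<epsilon>>0. \<forall>\<epsilon>'. 0 < \<epsilon>' \<and> \<epsilon>' \<le> \<epsilon> \<longrightarrow>
            cF \<delta> g1 g2 a b i \<ge> cFcat \<delta> g1 g2 a' b' \<epsilon>' a b i))"

definition dstep :: "real \<Rightarrow> real \<Rightarrow> nat \<Rightarrow> nat \<Rightarrow> real" where
  "dstep \<alpha> \<beta> i j = (if i = 1 then (if j = 1 then 1 - \<alpha> else \<alpha>) else (if j = 1 then \<beta> else 1 - \<beta>))"

fun dtrans :: "real \<Rightarrow> real \<Rightarrow> nat \<Rightarrow> nat \<Rightarrow> nat \<Rightarrow> real" where
  "dtrans \<alpha> \<beta> 0 i j = (if i = j then 1 else 0)"
| "dtrans \<alpha> \<beta> (Suc n) i j = (\<Sum>k\<in>{1,2}. dtrans \<alpha> \<beta> n i k * dstep \<alpha> \<beta> k j)"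

definition kap :: "(real \<Rightarrow> real) \<Rightarrow> (real \<Rightarrow> real) \<Rightarrow> (real \<Rightarrow> real) \<Rightarrow> real
    \<Rightarrow> nat \<Rightarrow> nat \<Rightarrow> real \<Rightarrow> real \<Rightarrow> real" where
  "kap \<delta> g1 g2 h n j \<alpha> \<beta> = \<delta> (real n * h) * (if j = 1 then g1 (\<alpha> / h) else g2 (\<beta> / h)) * h"

definition dV :: "(real \<Rightarrow> real) \<Rightarrow> (real \<Rightarrow> real) \<Rightarrow> (real \<Rightarrow> real) \<Rightarrow> real
    \<Rightarrow> real \<Rightarrow> real \<Rightarrow> nat \<Rightarrow> real" where
  "dV \<delta> g1 g2 h \<alpha> \<beta> i =
     (\<Sum>n. \<Sum>j\<in>{1,2}. dtrans \<alpha> \<beta> n i j * kap \<delta> g1 g2 h n j \<alpha> \<beta>)"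

definition dVcat :: "(real \<Rightarrow> real) \<Rightarrow> (real \<Rightarrow> real) \<Rightarrow> (real \<Rightarrow> real) \<Rightarrow> real
    \<Rightarrow> real \<Rightarrow> real \<Rightarrow> real \<Rightarrow> real \<Rightarrow> nat \<Rightarrow> real" where
  "dVcat \<delta> g1 g2 h \<alpha> \<beta> \<alpha>' \<beta>' i =
     kap \<delta> g1 g2 h 0 i \<alpha> \<beta>
   + (\<Sum>n. \<Sum>j\<in>{1,2}. \<Sum>k\<in>{1,2}.
        dstep \<alpha> \<beta> i j * dtrans \<alpha>' \<beta>' n j k * kap \<delta> g1 g2 h (Suc n) k \<alpha>' \<beta>')"

definition discrete_equilibrium :: "(real \<Rightarrow> real) \<Rightarrow> (real \<Rightarrow> real) \<Rightarrow> (real \<Rightarrow> real)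
    \<Rightarrow> real \<Rightarrow> real \<Rightarrow> real \<Rightarrow> bool" where
  "discrete_equilibrium \<delta> g1 g2 h \<alpha> \<beta> \<longleftrightarrow>
     (\<forall>\<alpha>' \<beta>' i. \<alpha>' \<in> {0..1} \<longrightarrow> \<beta>' \<in> {0..1} \<longrightarrow> i \<in> {1,2} \<longrightarrow>
        dV \<delta> g1 g2 h \<alpha> \<beta> i \<ge> dVcat \<delta> g1 g2 h \<alpha>' \<beta>' \<alpha> \<beta> i)"

end

theory Submission
  imports Defs
begin

definition dd :: "real \<Rightarrow> real" where "dd t = exp (- t) / 2 + exp (- 2 * t) / 2"
definition DD :: "real \<Rightarrow> real" where "DD e = exp (- e) / 2 + exp (- 2 * e) / 4"

lemma ctrans_alt: "ctrans a b t i j = (if i = j then 1 else 0)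
   + (if a + b = 0 then t else (1 - exp (- (a + b) * t)) / (a + b)) * gen a b i j"
  by (simp add: ctrans_def Let_def)

lemma ctrans00: "ctrans 0 0 t j k = (if j = k then 1 else 0)"
  by (simp add: ctrans_def Let_def gen_def)

lemma ctrans_at0: "ctrans a b 0 i j = (if i = j then 1 else 0)"
  by (simp add: ctrans_alt)

lemma ctrans_deriv: "((\<lambda>t. ctrans a b t i j) has_real_derivative exp (- (a + b) * t) * gen a b i j) (at t within S)"
proof (cases "a + b = 0")
  case True
  then show ?thesis unfolding ctrans_alt
    by (auto intro!: derivative_eq_intros)
next
  case False
  then show ?thesis
  proof -
    have d: "((\<lambda>t. (1 - exp (-(a+b)*t)) / (a+b)) has_real_derivative (0 - exp (-(a+b)*t) * (-(a+b)*1)) / (a+b)) (at t within S)"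
      using False by (auto intro!: derivative_eq_intros)
    have e: "(0 - exp (-(a+b)*t) * (-(a+b)*1)) / (a+b) = exp (-(a+b)*t)" using False by (simp add: field_simps)
    have d2: "((\<lambda>t. (if i = j then 1 else 0) + (1 - exp (-(a+b)*t)) / (a+b) * gen a b i j) has_real_derivative
       0 + exp (-(a+b)*t) * gen a b i j) (at t within S)"
      by (intro DERIV_add DERIV_const DERIV_cmult_right d[unfolded e])
    show ?thesis unfolding ctrans_alt using False d2 by simp
  qed
qed

lemma ctrans_cont [continuous_intros]: "continuous_on S (\<lambda>t. ctrans a b t i j)"
  unfolding continuous_on_eq_continuous_within
  using DERIV_continuous ctrans_deriv by blast

lemma DD_deriv: "(DD has_real_derivative - dd x) (at x within S)"
  unfolding DD_def dd_def by (auto intro!: derivative_eq_intros simp: field_simps)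

lemma dd_cont [continuous_intros]: "continuous_on S dd"
  unfolding dd_def by (intro continuous_intros) auto

lemma dd_int: "(dd has_integral DD e) {e..}"
proof -
  have 1: "((\<lambda>x. exp (-1*x)) has_integral exp (-1*e)/1) {e..}"
    by (rule has_integral_exp_minus_to_infinity) auto
  have 2: "((\<lambda>x. exp (-2*x)) has_integral exp (-2*e)/2) {e..}"
    by (rule has_integral_exp_minus_to_infinity) auto
  have "((\<lambda>x. exp (-1*x) / 2 + exp (-2*x) / 2) has_integral exp (-1*e)/1 / 2 + exp (-2*e)/2/2) {e..}"
    by (intro has_integral_add has_integral_divide 1 2)
  then show ?thesis unfolding dd_def DD_def by simp
qed

lemma cF00: "cF dd g1 (\<lambda>_. 0) 0 0 i = (if i = 1 then g1 0 else 0) * DD 0"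
proof -
  have "(\<lambda>t. \<Sum>j\<in>{1,2}. ctrans 0 0 t i j * crew dd g1 (\<lambda>_. 0) 0 0 t j)
      = (\<lambda>t. (if i = 1 then g1 0 else 0) * dd t)"
    by (auto simp: ctrans00 crew_def)
  moreover have "((\<lambda>t. (if i = 1 then g1 0 else 0) * dd t) has_integral (if i = 1 then g1 0 else 0) * DD 0) {0..}"
    by (intro has_integral_mult_right dd_int)
  ultimately show ?thesis unfolding cF_def using integral_unique by metis
qed

lemma cFcat00: "cFcat dd g1 (\<lambda>_. 0) a b e 0 0 i =
   integral {0..e} (\<lambda>t. ctrans a b t i 1 * dd t * g1 a) + ctrans a b e i 1 * g1 0 * DD e"
proof -
  have 1: "(\<lambda>t. \<Sum>j\<in>{1,2}. ctrans a b t i j * crew dd g1 (\<lambda>_. 0) a b t j)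
      = (\<lambda>t. ctrans a b t i 1 * dd t * g1 a)"
    by (auto simp: crew_def)
  have 2: "(\<lambda>t. \<Sum>j\<in>{1,2}. \<Sum>k\<in>{1,2}.
        ctrans a b e i j * ctrans 0 0 (t - e) j k * crew dd g1 (\<lambda>_. 0) 0 0 t k)
      = (\<lambda>t. ctrans a b e i 1 * g1 0 * dd t)"
    by (auto simp: ctrans00 crew_def)
  have 3: "((\<lambda>t. ctrans a b e i 1 * g1 0 * dd t) has_integral ctrans a b e i 1 * g1 0 * DD e) {e..}"
    by (intro has_integral_mult_right dd_int)
  show ?thesis unfolding cFcat_def 1 2 using integral_unique[OF 3] by simp
qed

definition Gf :: "(real \<Rightarrow> real) \<Rightarrow> real \<Rightarrow> real \<Rightarrow> nat \<Rightarrow> real \<Rightarrow> real" where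
  "Gf g1 a b i e = integral {0..e} (\<lambda>t. ctrans a b t i 1 * dd t * g1 a) + ctrans a b e i 1 * g1 0 * DD e"

lemma Gf_deriv:
  assumes "x \<in> {0..B}"
  shows "(Gf g1 a b i has_real_derivative
     ctrans a b x i 1 * dd x * g1 a + (exp (- (a + b) * x) * gen a b i 1 * g1 0 * DD x + ctrans a b x i 1 * g1 0 * (- dd x)))
     (at x within {0..B})"
proof -
  have 1: "((\<lambda>e. integral {0..e} (\<lambda>t. ctrans a b t i 1 * dd t * g1 a)) has_real_derivative
     ctrans a b x i 1 * dd x * g1 a) (at x within {0..B})"
    by (rule integral_has_real_derivative[OF _ assms]) (intro continuous_intros)
  have 2: "((\<lambda>e. ctrans a b e i 1 * g1 0 * DD e) has_real_derivative
     exp (- (a + b) * x) * gen a b i 1 * g1 0 * DD x + ctrans a b x i 1 * g1 0 * (- dd x)) (at x within {0..B})"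
  proof -
    have c: "((\<lambda>e. ctrans a b e i 1 * g1 0) has_real_derivative exp (- (a + b) * x) * gen a b i 1 * g1 0) (at x within {0..B})"
      by (rule DERIV_cmult_right[OF ctrans_deriv])
    show ?thesis by (rule DERIV_cong[OF DERIV_mult[OF c DD_deriv]]) (simp add: algebra_simps)
  qed
  show ?thesis unfolding Gf_def[abs_def] using DERIV_add[OF 1 2] by simp
qed

definition gg :: "real \<Rightarrow> real \<Rightarrow> real" where
  "gg k = (\<lambda>a. - (1/4) * a ^ 4 + k * a ^ 3 - k ^ 2 * a ^ 2 - (3/4) * a - 1)"

lemma DD0: "DD 0 = 3/4" by (simp add: DD_def)

lemma weak: "weak_equilibrium dd (gg k) (\<lambda>_. 0) 0 0"
  unfolding weak_equilibrium_def
proof (intro allI impI)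
  fix a b :: real and i :: nat
  assume ab: "0 \<le> a" "0 \<le> b" and i: "i \<in> {1,2}"
  let ?g = "gg k"
  define L where "L = - (ctrans a b 0 i 1 * dd 0 * ?g a + (exp (- (a + b) * 0) * gen a b i 1 * ?g 0 * DD 0
      + ctrans a b 0 i 1 * ?g 0 * (- dd 0)))"
  have d: "(Gf ?g a b i has_real_derivative - L) (at 0 within {0..1})"
    unfolding L_def by (rule DERIV_cong[OF Gf_deriv[of 0 1 "gg k" a b i]]) (simp_all add: algebra_simps)
  have G0: "Gf ?g a b i 0 = cF dd ?g (\<lambda>_. 0) 0 0 i"
    by (simp add: Gf_def cF00 ctrans_at0)
  have lim: "((\<lambda>e. (Gf ?g a b i e - Gf ?g a b i 0) / (e - 0)) \<longlongrightarrow> - L) (at_right 0)"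
    using d unfolding has_field_derivative_iff at_within_Icc_at_right[OF zero_less_one] .
  have "((\<lambda>e. (cF dd ?g (\<lambda>_. 0) 0 0 i - cFcat dd ?g (\<lambda>_. 0) a b e 0 0 i) / e) \<longlongrightarrow> L) (at_right 0)"
  proof -
    have "((\<lambda>e. - ((Gf ?g a b i e - Gf ?g a b i 0) / (e - 0))) \<longlongrightarrow> - (- L)) (at_right 0)"
      by (intro tendsto_minus lim)
    moreover have "(\<lambda>e. - ((Gf ?g a b i e - Gf ?g a b i 0) / (e - 0))) =
        (\<lambda>e. (cF dd ?g (\<lambda>_. 0) 0 0 i - cFcat dd ?g (\<lambda>_. 0) a b e 0 0 i) / e)"
    proof -
      have eq: "\<And>e. cFcat dd ?g (\<lambda>_. 0) a b e 0 0 i = Gf ?g a b i e" by (simp add: cFcat00 Gf_def)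
      show ?thesis unfolding eq G0[symmetric] by (rule ext) (simp add: minus_divide_left minus_diff_eq)
    qed
    ultimately show ?thesis by simp
  qed
  then have "Liminf (at_right 0) (\<lambda>e. ereal ((cF dd ?g (\<lambda>_. 0) 0 0 i - cFcat dd ?g (\<lambda>_. 0) a b e 0 0 i) / e)) = ereal L"
    by (intro lim_imp_Liminf tendsto_ereal) auto
  moreover have "L \<ge> 0"
  proof (cases "i = 1")
    case True
    have "L = a^2 * (a/2 - k)^2"
      unfolding L_def using True by (simp add: ctrans_at0 gen_def dd_def DD0 gg_def power2_eq_square) (simp add: field_simps eval_nat_numeral)
    then show ?thesis by simp
  next
    case False
    then have "i = 2" using i by auto
    then have "L = 3/4 * b"
      unfolding L_def by (simp add: ctrans_at0 gen_def dd_def DD0 gg_def)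
    then show ?thesis using ab by simp
  qed
  ultimately show "Liminf (at_right 0) (\<lambda>e. ereal ((cF dd ?g (\<lambda>_. 0) 0 0 i - cFcat dd ?g (\<lambda>_. 0) a b e 0 0 i) / e)) \<ge> 0"
    by simp
qed

lemma notstrong:
  assumes k: "k > 0"
  shows "\<not> strong_equilibrium dd (gg k) (\<lambda>_. 0) 0 0"
proof -
  let ?g = "gg k"
  let ?G = "Gf ?g (2 * k) 0 1"
  have inc: "?G 0 < ?G e" if e: "e > 0" for e
  proof (rule DERIV_pos_imp_increasing_open[OF e])
    fix x assume x: "0 < x" "x < e"
    have "at x within {0..e} = at x"
      by (rule at_within_interior) (use x in simp)
    then have d: "(?G has_real_derivative
       ctrans (2*k) 0 x 1 1 * dd x * ?g (2*k) + (exp (- (2*k + 0) * x) * gen (2*k) 0 1 1 * ?g 0 * DD x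
         + ctrans (2*k) 0 x 1 1 * ?g 0 * (- dd x))) (at x)"
      using Gf_deriv[of x e ?g "2*k" 0 1] x by simp
    have ct: "ctrans (2*k) 0 x 1 1 = exp (- (2*k) * x)"
      using k by (simp add: ctrans_alt gen_def)
    have g2k: "?g (2*k) = - (3/2) * k - 1"
      by (simp add: gg_def field_simps eval_nat_numeral)
    have val: "ctrans (2*k) 0 x 1 1 * dd x * ?g (2*k) + (exp (- (2*k + 0) * x) * gen (2*k) 0 1 1 * ?g 0 * DD x
         + ctrans (2*k) 0 x 1 1 * ?g 0 * (- dd x)) = k / 4 * exp (- (2*k) * x) * (exp (- x) - exp (- 2 * x))"
      unfolding ct g2k by (simp add: gen_def gg_def dd_def DD_def field_simps)
    have "exp (- 2 * x) < exp (- x)" using x by simp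
    then have "k / 4 * exp (- (2*k) * x) * (exp (- x) - exp (- 2 * x)) > 0" using k by simp
    then show "\<exists>y. DERIV ?G x :> y \<and> y > 0" using d val by metis
  next
    show "continuous_on {0..e} ?G"
      unfolding continuous_on_eq_continuous_within
      using Gf_deriv DERIV_continuous by blast
  qed
  have eq: "\<And>e. cFcat dd ?g (\<lambda>_. 0) (2*k) 0 e 0 0 1 = ?G e" by (simp add: cFcat00 Gf_def)
  have G0: "?G 0 = cF dd ?g (\<lambda>_. 0) 0 0 1"
    by (simp add: Gf_def cF00 ctrans_at0)
  show ?thesis
    unfolding strong_equilibrium_def not_all
    apply (rule exI[of _ "2*k"], rule exI[of _ 0], rule exI[of _ 1])
    using k inc eq G0 by (auto simp: not_le)
qed

lemma dtrans00: "i \<in> {1,2} \<Longrightarrow> j \<in> {1,2} \<Longrightarrow> dtrans 0 0 n i j = (if i = j then 1 else 0)"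
proof (induction n arbitrary: j)
  case 0 then show ?case by simp
next
  case (Suc n) then show ?case by (auto simp: dstep_def)
qed

lemma geo_aux:
  fixes h :: real
  assumes h: "h > 0"
  shows "h * (exp (- h) / (1 - exp (- h))) \<le> 1"
proof -
  have e: "exp (- h) = 1 / exp h" using exp_minus[of h] by (simp add: inverse_eq_divide)
  have p: "exp h - 1 \<ge> h" using exp_ge_add_one_self[of h] by linarith
  have "exp (- h) / (1 - exp (- h)) = 1 / (exp h - 1)"
    unfolding e using h by (simp add: field_simps)
  moreover have "h * (1 / (exp h - 1)) \<le> 1" using p h by (simp add: field_simps)
  ultimately show ?thesis by simp
qed

lemma dd_pow: "dd (real n * h) = exp (- h) ^ n / 2 + exp (- 2 * h) ^ n / 2"
proof -
  have "exp (- (real n * h)) = exp (- h) ^ n" using exp_of_nat_mult[of n "- h"] by simp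
  moreover have "exp (- 2 * (real n * h)) = exp (- 2 * h) ^ n" using exp_of_nat_mult[of n "- 2 * h"] by (simp add: algebra_simps)
  ultimately show ?thesis by (simp add: dd_def)
qed

lemma discrete:
  assumes k: "k > 0" and h: "h > 0"
  shows "discrete_equilibrium dd (gg k) (\<lambda>_. 0) h 0 0"
  unfolding discrete_equilibrium_def
proof (intro allI impI)
  fix \<alpha> \<beta> :: real and i :: nat
  assume a: "\<alpha> \<in> {0..1}" and b: "\<beta> \<in> {0..1}" and i: "i \<in> {1,2}"
  define q1 where "q1 = exp (- h)"
  define q2 where "q2 = exp (- 2 * h)"
  have q1: "0 < q1" "q1 < 1" using h by (auto simp: q1_def)
  have q2: "0 < q2" "q2 < 1" using h by (auto simp: q2_def)
  define S0 where "S0 = 1 / (1 - q1) / 2 + 1 / (1 - q2) / 2"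
  define T where "T = q1 / (1 - q1) / 2 + q2 / (1 - q2) / 2"
  have r1: "1 / (1 - q1) = 1 + q1 / (1 - q1)" using q1 by (simp add: field_simps)
  have r2: "1 / (1 - q2) = 1 + q2 / (1 - q2)" using q2 by (simp add: field_simps)
  have S0T: "S0 = 1 + T" unfolding S0_def T_def r1 r2 by (simp add: add_divide_distrib)
  have sS: "(\<lambda>n. dd (real n * h)) sums S0"
    unfolding dd_pow S0_def q1_def[symmetric] q2_def[symmetric]
    using q1 q2 by (intro sums_add sums_divide geometric_sums) auto
  have g1: "(\<lambda>n. q1 * q1^n) sums (q1 / (1-q1))" using sums_mult[OF geometric_sums[of q1], of q1] q1 by simp
  have g2: "(\<lambda>n. q2 * q2^n) sums (q2 / (1-q2))" using sums_mult[OF geometric_sums[of q2], of q2] q2 by simp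
  have sT: "(\<lambda>n. dd (real (Suc n) * h)) sums T"
    unfolding dd_pow T_def q1_def[symmetric] q2_def[symmetric] power_Suc
    by (intro sums_add sums_divide g1 g2)
  have T0: "T \<ge> 0" using q1 q2 by (simp add: T_def)
  have hT: "h * T \<le> 3/4"
  proof -
    have 1: "h * (q1 / (1 - q1)) \<le> 1" unfolding q1_def by (rule geo_aux[OF h])
    have "(2*h) * (exp (- (2*h)) / (1 - exp (- (2*h)))) \<le> 1" by (rule geo_aux) (use h in simp)
    moreover have "exp (- (2*h)) = q2" by (simp add: q2_def)
    ultimately have "2 * (h * (q2 / (1 - q2))) \<le> 1" by (simp only: mult.assoc)
    then have 2: "h * (q2 / (1 - q2)) \<le> 1/2" by linarith
    define A where "A = h * (q1 / (1 - q1))"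
    define B where "B = h * (q2 / (1 - q2))"
    have "h*T = A/2 + B/2" by (simp add: T_def distrib_left A_def B_def)
    then show ?thesis using 1 2 unfolding A_def[symmetric] B_def[symmetric] by linarith
  qed
  have V: "dV dd (gg k) (\<lambda>_. 0) h 0 0 i = (if i = 1 then - h * S0 else 0)"
  proof -
    have "(\<lambda>n. \<Sum>j\<in>{1,2}. dtrans 0 0 n i j * kap dd (gg k) (\<lambda>_. 0) h n j 0 0)
        = (\<lambda>n. (if i = 1 then - h else 0) * dd (real n * h))"
      using i by (auto simp: dtrans00 kap_def gg_def)
    moreover have "(\<lambda>n. (if i = 1 then - h else 0) * dd (real n * h)) sums ((if i = 1 then - h else 0) * S0)"
      by (intro sums_mult sS)
    ultimately show ?thesis unfolding dV_def using sums_unique by fastforce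
  qed
  have Vc: "dVcat dd (gg k) (\<lambda>_. 0) h \<alpha> \<beta> 0 0 i
     = kap dd (gg k) (\<lambda>_. 0) h 0 i \<alpha> \<beta> + (- h * dstep \<alpha> \<beta> i 1) * T"
  proof -
    have "(\<lambda>n. \<Sum>j\<in>{1,2}. \<Sum>k'\<in>{1,2}. dstep \<alpha> \<beta> i j * dtrans 0 0 n j k' * kap dd (gg k) (\<lambda>_. 0) h (Suc n) k' 0 0)
        = (\<lambda>n. (- h * dstep \<alpha> \<beta> i 1) * dd (real (Suc n) * h))"
      by (auto simp: dtrans00 kap_def gg_def fun_eq_iff)
    moreover have "(\<lambda>n. (- h * dstep \<alpha> \<beta> i 1) * dd (real (Suc n) * h)) sums ((- h * dstep \<alpha> \<beta> i 1) * T)"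
      by (intro sums_mult sT)
    ultimately show ?thesis unfolding dVcat_def using sums_unique by fastforce
  qed
  show "dVcat dd (gg k) (\<lambda>_. 0) h \<alpha> \<beta> 0 0 i \<le> dV dd (gg k) (\<lambda>_. 0) h 0 0 i"
  proof (cases "i = 1")
    case True
    define x where "x = \<alpha> / h"
    have ax: "\<alpha> = x * h" using h by (simp add: x_def)
    have x0: "x \<ge> 0" using a h by (simp add: x_def)
    have key: "- 1 - gg k x = x^2 * (x/2 - k)^2 + 3/4 * x"
      by (simp add: gg_def field_simps eval_nat_numeral)
    have "x * (h * T) \<le> x * (3/4)" by (rule mult_left_mono[OF hT x0])
    moreover have "0 \<le> x^2 * (x/2 - k)^2" by simp
    ultimately have "0 \<le> x^2 * (x/2 - k)^2 + 3/4 * x - x * (h * T)"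
      by linarith
    then have "0 \<le> h * (x^2 * (x/2 - k)^2 + 3/4 * x - x * (h * T))" using h by simp
    then have "0 \<le> h * (- 1 - gg k x) - (x * h) * h * T" unfolding key by (simp add: algebra_simps)
    moreover have e1: "dV dd (gg k) (\<lambda>_. 0) h 0 0 i = - h - h * T" using True V S0T by (simp add: algebra_simps)
    moreover have e2: "dVcat dd (gg k) (\<lambda>_. 0) h \<alpha> \<beta> 0 0 i = h * gg k x - h * T + (x * h) * h * T"
      using True Vc h by (simp add: kap_def dstep_def dd_def ax algebra_simps)
    ultimately show ?thesis by (simp add: algebra_simps)
  next
    case False
    then have "i = 2" using i by auto
    then show ?thesis using V Vc T0 b h by (simp add: kap_def dstep_def)
  qed
qed

theorem mainTheorem14:
  fixes k :: real and \<delta> g1 g2 :: "real \<Rightarrow> real"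
  assumes "k > 0"
    and "\<delta> = (\<lambda>t. exp (- t) / 2 + exp (- 2 * t) / 2)"
    and "g2 = (\<lambda>_. 0)"
    and "g1 = (\<lambda>a. - (1/4) * a ^ 4 + k * a ^ 3 - k ^ 2 * a ^ 2 - (3/4) * a - 1)"
  shows "weak_equilibrium \<delta> g1 g2 0 0
       \<and> \<not> strong_equilibrium \<delta> g1 g2 0 0
       \<and> (\<exists>h0 > 0. \<forall>h. 0 < h \<and> h < h0 \<longrightarrow> discrete_equilibrium \<delta> g1 g2 h 0 0)"
proof -
  have d: "\<delta> = dd" using assms(2) by (simp add: dd_def fun_eq_iff)
  have g: "g1 = gg k" using assms(4) by (simp add: gg_def)
  show ?thesis unfolding d g assms(3)
    using weak[of k] notstrong[OF assms(1)] discrete[OF assms(1)] by (auto intro!: exI[of _ 1])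
qed

end
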